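(* Let $x,y,z,a,b,c\ge 0$ be reals with $x^2+y^2+z^2=a^2+b^2+c^2$ and $x^3+y^3+z^3=a^3+b^3+c^3$. Then \[ (x,y,z,-z,-y,-x)\succ_4(a,b,c,-c,-b,-a) \] if and only if $\max(x,y,z)\ge\max(a,b,c)$.
   Context: For $u,v\in\mathbb{R}^n$, $u\succ_4 v$ means $\sum_{i=1}^n f(u_i)\ge\sum_{i=1}^n f(v_i)$ for every four times differentiable $f:\mathbb{R}\to\mathbb{R}$ with $f^{(4)}\ge 0$. *)

theory Defs
  imports "HOL-Analysis.Analysis"
begin

definition four_convex :: "(real \<Rightarrow> real) \<Rightarrow> bool" where
  "four_convex f \<longleftrightarrow> (\<exists>f1 f2 f3 f4 :: real \<Rightarrow> real.
      (\<forall>t. (f has_real_derivative f1 t) (at t)) \<and>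
      (\<forall>t. (f1 has_real_derivative f2 t) (at t)) \<and>
      (\<forall>t. (f2 has_real_derivative f3 t) (at t)) \<and>
      (\<forall>t. (f3 has_real_derivative f4 t) (at t)) \<and>
      (\<forall>t. f4 t \<ge> 0))"

definition maj4 :: "real list \<Rightarrow> real list \<Rightarrow> bool" where
  "maj4 u v \<longleftrightarrow> length u = length v \<and>
     (\<forall>f. four_convex f \<longrightarrow> (\<Sum>i<length u. f (u ! i)) \<ge> (\<Sum>i<length v. f (v ! i)))"

end

theory Submission
  imports Defs
begin

lemma deriv_glue:
  fixes f g f' g' :: "real \<Rightarrow> real"
  assumes f: "\<And>r. (f has_real_derivative f' r) (at r)"
    and g: "\<And>r. (g has_real_derivative g' r) (at r)"
    and e1: "f p = g p" and e2: "f' p = g' p"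
  shows "((\<lambda>r. if r \<le> p then f r else g r) has_real_derivative (if r \<le> p then f' r else g' r)) (at r)"
proof -
  have "((\<lambda>r. if r \<in> {..p} then f r else g r) has_vector_derivative (if r \<in> {..p} then f' r else g' r)) (at r within UNIV)"
    apply (rule has_vector_derivative_If_within_closures[where T="{p<..}"])
    using f g e1 e2
    by (auto simp: has_real_derivative_iff_has_vector_derivative[symmetric] intro: has_field_derivative_at_within)
  then show ?thesis by (simp add: has_real_derivative_iff_has_vector_derivative)
qed

lemma pow_plus_deriv:
  "((\<lambda>v. (max (v - m) 0) ^ Suc k) has_real_derivative (of_nat (Suc k) * (max (v - m) 0) ^ k)) (at v)"
  if "k \<ge> 1" for m :: real
proof -
  have "((\<lambda>r. if r \<le> m then 0 else (r - m) ^ Suc k) has_real_derivative (if v \<le> m then 0 else of_nat (Suc k) * (v - m) ^ k)) (at v)"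
    apply (rule deriv_glue)
    using that by (auto intro!: derivative_eq_intros simp: algebra_simps power_Suc2[symmetric] simp del: power_Suc elim!: Suc_le_D[THEN exE])
  moreover have "(\<lambda>r. if r \<le> m then 0 else (r - m) ^ Suc k) = (\<lambda>v. (max (v - m) 0) ^ Suc k)"
    by (auto simp: max_def)
  moreover have "(if v \<le> m then 0 else of_nat (Suc k) * (v - m) ^ k) = of_nat (Suc k) * (max (v - m) 0) ^ k"
    using that by (auto simp: max_def)
  ultimately show ?thesis by simp
qed

lemma cubic_mono:
  fixes l u al be ga :: real
  assumes "l \<le> u" and "\<And>v. l \<le> v \<Longrightarrow> v \<le> u \<Longrightarrow> 0 \<le> 3* al* v^2 + 2* be* v + ga"
  shows "al* l^3+be* l^2+ga* l \<le> al* u^3+be* u^2+ga* u"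
proof (rule DERIV_nonneg_imp_nondecreasing[OF assms(1), where f="\<lambda>v. al* v^3+be* v^2+ga* v"])
  fix v assume "l \<le> v" "v \<le> u"
  show "\<exists>y. DERIV (\<lambda>v. al* v^3+be* v^2+ga* v) v :> y \<and> y \<ge> 0"
    apply (rule exI[of _ "3* al* v^2 + 2* be* v + ga"])
    using assms(2)[OF \<open>l \<le> v\<close> \<open>v \<le> u\<close>]
    by (auto intro!: derivative_eq_intros simp: algebra_simps power2_eq_square)
qed

lemma cube_lo:
  fixes v w :: real assumes "0 \<le> w" "w \<le> v"
  shows "v^3 - w^3 \<ge> (3* w/2) * (v^2-w^2)"
proof -
  have "v^3 - w^3 - (3* w/2) * (v^2-w^2) = (v-w)^2 * (v+w/2)" by (simp add: field_simps power2_eq_square power3_eq_cube)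
  moreover have "(v-w)^2 * (v+w/2) \<ge> 0" using assms by simp
  ultimately show ?thesis by linarith
qed

lemma cube_hi:
  fixes v w :: real assumes "0 \<le> w" "w \<le> v"
  shows "v^3 - w^3 \<le> (3* v/2) * (v^2-w^2)"
proof -
  have "(3* v/2) * (v^2-w^2) - (v^3 - w^3) = (v-w)^2 * (v/2+w)" by (simp add: field_simps power2_eq_square power3_eq_cube)
  moreover have "(v-w)^2 * (v/2+w) \<ge> 0" using assms by simp
  ultimately show ?thesis by linarith
qed

lemma cube_hi_strict:
  fixes v w :: real assumes "0 \<le> w" "w < v"
  shows "v^3 - w^3 < (3* v/2) * (v^2-w^2)"
proof -
  have "(3* v/2) * (v^2-w^2) - (v^3 - w^3) = (v-w)^2 * (v/2+w)" by (simp add: field_simps power2_eq_square power3_eq_cube)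
  moreover have "(v-w)^2 * (v/2+w) > 0" using assms by (intro mult_pos_pos) auto
  ultimately show ?thesis by linarith
qed

lemma order_lemma:
  fixes x y z a b c :: real
  assumes s: "x \<ge> y" "y \<ge> z" "z \<ge> 0" "a \<ge> b" "b \<ge> c" "c \<ge> 0" "x \<ge> a"
    and e2: "x^2 + y^2 + z^2 = a^2 + b^2 + c^2"
    and e3: "x^3 + y^3 + z^3 = a^3 + b^3 + c^3"
  shows "c \<le> z \<and> y \<le> b"
proof -
  have zc: "c \<le> z"
  proof (rule ccontr)
    assume "\<not> c \<le> z" hence cz: "z < c" by simp
    have h3: "c^3 - z^3 < (3* c/2) * (c^2-z^2)" using cube_hi_strict[OF s(3) cz] .
    show False
    proof (cases "b \<le> y")
      case True
      have "x^3 - a^3 \<ge> (3* a/2) * (x^2-a^2)" using cube_lo s by simp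
      moreover have "(3* a/2) * (x^2-a^2) \<ge> (3* c/2) * (x^2-a^2)"
        using s by (intro mult_right_mono) (auto intro: power_mono)
      moreover have "y^3 - b^3 \<ge> (3* b/2) * (y^2-b^2)" using cube_lo s True by simp
      moreover have "(3* b/2) * (y^2-b^2) \<ge> (3* c/2) * (y^2-b^2)"
        using s True by (intro mult_right_mono) (auto intro: power_mono)
      ultimately have "(3* c/2) * ((x^2-a^2)+(y^2-b^2)) < (x^3-a^3)+(y^3-b^3) - (c^3-z^3) + (3* c/2) * (c^2-z^2)"
        using h3 by (simp add: algebra_simps)
      moreover have "c * (x^2+y^2+z^2) = c * (a^2+b^2+c^2)" using e2 by simp
      ultimately show False using e3 by (simp add: algebra_simps)
    next
      case False
      have "x^3 - a^3 \<ge> (3* a/2) * (x^2-a^2)" using cube_lo s by simp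
      moreover have "b^3 - y^3 \<le> (3* b/2) * (b^2-y^2)" using cube_hi s False by simp
      moreover have "(3* b/2) * (b^2-y^2) \<le> (3* a/2) * (b^2-y^2)"
        using s False by (intro mult_right_mono) (auto intro: power_mono)
      moreover have "(3* c/2) * (c^2-z^2) \<le> (3* a/2) * (c^2-z^2)"
        using s cz by (intro mult_right_mono) (auto intro: power_mono)
      ultimately have "(x^3-a^3) - (b^3-y^3) - (c^3-z^3) > (3* a/2) * ((x^2-a^2) - (b^2-y^2) - (c^2-z^2))"
        using h3 by (simp add: algebra_simps)
      moreover have "a * (x^2+y^2+z^2) = a * (a^2+b^2+c^2)" using e2 by simp
      ultimately show False using e3 by (simp add: algebra_simps)
    qed
  qed
  moreover have "y \<le> b"
  proof (rule ccontr)
    assume "\<not> y \<le> b"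
    hence "b^2 < y^2" using s by (intro power_strict_mono) auto
    moreover have "a^2 \<le> x^2" "c^2 \<le> z^2" using s zc by (auto intro: power_mono)
    ultimately show False using e2 by linarith
  qed
  ultimately show ?thesis by simp
qed

definition pp :: "real \<Rightarrow> real \<Rightarrow> real" where "pp s v = (max (v - s) 0)^3"

definition Phi :: "real \<Rightarrow> real \<Rightarrow> real \<Rightarrow> real \<Rightarrow> real" where
  "Phi s A B v = pp s v - A* v^3 - B* v^2"

lemma Phi_hi: "s \<le> v \<Longrightarrow> Phi s A B v = (1-A)* v^3 + (-3* s-B)* v^2 + 3* s^2* v - s^3"
  by (simp add: Phi_def pp_def max_def power2_eq_square power3_eq_cube algebra_simps)

lemma Phi_lo: "v \<le> s \<Longrightarrow> Phi s A B v = (-A)* v^3 + (-B)* v^2 + 0* v"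
  by (simp add: Phi_def pp_def max_def)

lemma phi_mono_hi:
  assumes "s \<le> l" "l \<le> u" "\<And>v. l \<le> v \<Longrightarrow> v \<le> u \<Longrightarrow> 0 \<le> 3 * (1-A)* v^2 + 2 * (-3* s-B)* v + 3* s^2"
  shows "Phi s A B l \<le> Phi s A B u"
  using cubic_mono[OF assms(2), of "1-A" "-3* s-B" "3* s^2"] assms Phi_hi[of s l A B] Phi_hi[of s u A B] by simp

lemma phi_anti_hi:
  assumes "s \<le> l" "l \<le> u" "\<And>v. l \<le> v \<Longrightarrow> v \<le> u \<Longrightarrow> 3 * (1-A)* v^2 + 2 * (-3* s-B)* v + 3* s^2 \<le> 0"
  shows "Phi s A B u \<le> Phi s A B l"
proof -
  have "(-(1-A))* l^3+(-(-3* s-B))* l^2+(-(3* s^2))* l \<le> (-(1-A))* u^3+(-(-3* s-B))* u^2+(-(3* s^2))* u"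
    apply (rule cubic_mono[OF assms(2)]) subgoal for v using assms(3)[of v] by (simp add: algebra_simps) done
  then show ?thesis using assms Phi_hi[of s l A B] Phi_hi[of s u A B] by (simp add: algebra_simps)
qed

lemma phi_mono_lo:
  assumes "u \<le> s" "l \<le> u" "\<And>v. l \<le> v \<Longrightarrow> v \<le> u \<Longrightarrow> 0 \<le> 3 * (-A)* v^2 + 2 * (-B)* v"
  shows "Phi s A B l \<le> Phi s A B u"
  using cubic_mono[OF assms(2), of "-A" "-B" 0] assms Phi_lo[of l s A B] Phi_lo[of u s A B] by simp

lemma phi_anti_lo:
  assumes "u \<le> s" "l \<le> u" "\<And>v. l \<le> v \<Longrightarrow> v \<le> u \<Longrightarrow> 3 * (-A)* v^2 + 2 * (-B)* v \<le> 0"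
  shows "Phi s A B u \<le> Phi s A B l"
proof -
  have "A* l^3+B* l^2+0* l \<le> A* u^3+B* u^2+0* u"
    apply (rule cubic_mono[OF assms(2)]) subgoal for v using assms(3)[of v] by (simp add: algebra_simps) done
  then show ?thesis using assms Phi_lo[of l s A B] Phi_lo[of u s A B] by (simp add: algebra_simps)
qed

lemma phi_combine:
  assumes "Phi s A B a \<le> Phi s A B x" "Phi s A B b \<le> Phi s A B y" "Phi s A B c \<le> Phi s A B z"
    and e2: "x^2 + y^2 + z^2 = a^2 + b^2 + c^2"
    and e3: "x^3 + y^3 + z^3 = a^3 + b^3 + c^3"
  shows "pp s a + pp s b + pp s c \<le> pp s x + pp s y + pp s z"
proof -
  have "A * (x^3 + y^3 + z^3) = A * (a^3 + b^3 + c^3)" "B * (x^2 + y^2 + z^2) = B * (a^2 + b^2 + c^2)"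
    using e2 e3 by simp_all
  then show ?thesis using assms(1-3) unfolding Phi_def by (simp add: algebra_simps)
qed

lemma G_case1:
  fixes x y z a b c s :: real
  assumes ch: "c \<le> z" "z \<le> y" "y \<le> b" "b \<le> a" "a \<le> x" "c \<ge> 0" and s: "0 < s" "s \<le> y"
    and e2: "x^2 + y^2 + z^2 = a^2 + b^2 + c^2"
    and e3: "x^3 + y^3 + z^3 = a^3 + b^3 + c^3"
  shows "pp s a + pp s b + pp s c \<le> pp s x + pp s y + pp s z"
proof -
  have y0: "y > 0" and b0: "b > 0" using ch s by auto
  define K where "K = s^2/(y* b)"
  have Kyb: "K* y* b = s^2" using y0 b0 by (simp add: K_def)
  have K0: "K \<ge> 0" using y0 b0 by (simp add: K_def)
  define A where "A = 1 - K"
  define B where "B = -3* s + 3/2* K * (y+b)"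
  have hi: "3 * (1-A)* v^2 + 2 * (-3* s-B)* v + 3* s^2 = 3* K * (v-y) * (v-b)" for v
  proof -
    have "3 * (1-A)* v^2 + 2 * (-3* s-B)* v + 3* s^2 - 3* K * (v-y) * (v-b) = 3 * (s^2 - K* y* b)"
      by (simp add: A_def B_def algebra_simps power2_eq_square)
    then show ?thesis using Kyb by simp
  qed
  define L0 where "L0 = 6* s - 3* K * (y+b)"
  define Ls where "Ls = 3* s - 3* K * (y+b) + 3* K* s"
  have "K* y = s^2/b" "K* b = s^2/y" using y0 b0 by (simp_all add: K_def)
  moreover have "s^2/b \<le> s" "s^2/y \<le> s" using s ch y0 b0
    by (simp_all add: divide_le_eq power2_eq_square mult_left_mono)
  ultimately have "K * (y+b) \<le> 2* s" by (simp add: algebra_simps)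
  hence L00: "L0 \<ge> 0" by (simp add: L0_def)
  have "s* Ls = 3* K * ((y-s) * (b-s))"
    using Kyb by (simp add: Ls_def algebra_simps power2_eq_square)
  moreover have "3* K * ((y-s) * (b-s)) \<ge> 0" using K0 s ch by simp
  ultimately have Ls0: "Ls \<ge> 0" using s by (metis zero_le_mult_iff not_less)
  have lo: "0 \<le> 3 * (-A)* v^2 + 2 * (-B)* v" if "0 \<le> v" "v \<le> s" for v
  proof -
    have eq: "s * (3 * (-A)* v^2 + 2 * (-B)* v) = v * ((s-v)* L0 + v * Ls)"
      by (simp add: A_def B_def L0_def Ls_def algebra_simps power2_eq_square)
    have "(s-v)* L0 + v * Ls \<ge> 0" using that L00 Ls0 by simp
    hence "s * (3 * (-A)* v^2 + 2 * (-B)* v) \<ge> 0" using eq that by simp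
    thus ?thesis using s by (simp add: zero_le_mult_iff)
  qed
  have m1: "Phi s A B a \<le> Phi s A B x"
    apply (rule phi_mono_hi)
      subgoal using ch s by simp
      subgoal using ch s by simp
    subgoal for v unfolding hi using K0 ch by (auto intro!: mult_nonneg_nonneg) done
  have m2: "Phi s A B b \<le> Phi s A B y"
    apply (rule phi_anti_hi)
      subgoal using ch s by simp
      subgoal using ch s by simp
    subgoal for v unfolding hi using K0 by (simp add: mult_nonneg_nonpos) done
  have mono0: "Phi s A B l \<le> Phi s A B u" if "0 \<le> l" "l \<le> u" "u \<le> y" for l u
  proof -
    have mhi: "Phi s A B l' \<le> Phi s A B u'" if "s \<le> l'" "l' \<le> u'" "u' \<le> y" for l' u'
      apply (rule phi_mono_hi)
      subgoal using that by simp
      subgoal using that by simp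
      subgoal for v proof -
        assume v: "l' \<le> v" "v \<le> u'"
        have h: "(v-y) * (v-b) \<ge> 0" using that ch v by (intro mult_nonpos_nonpos) auto
        show ?thesis unfolding hi using mult_nonneg_nonneg[OF _ h, of "3 * K"] K0 by (simp only: mult.assoc)
      qed done
    have mlo: "Phi s A B l' \<le> Phi s A B u'" if "0 \<le> l'" "l' \<le> u'" "u' \<le> s" for l' u'
      apply (rule phi_mono_lo) using that lo by simp_all
    show ?thesis
    proof (cases "u \<le> s")
      case True then show ?thesis using mlo that by simp
    next
      case False
      show ?thesis
      proof (cases "s \<le> l")
        case True then show ?thesis using mhi that by simp
      next
        case False
        have "Phi s A B l \<le> Phi s A B s" using mlo that False by simp
        also have "\<dots> \<le> Phi s A B u" using mhi that \<open>\<not> u \<le> s\<close> by simp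
        finally show ?thesis .
      qed
    qed
  qed
  have m3: "Phi s A B c \<le> Phi s A B z" using mono0 ch by simp
  show ?thesis using phi_combine[OF m1 m2 m3 e2 e3] .
qed

lemma G_case2:
  fixes x y z a b c s :: real
  assumes ch: "c \<le> z" "z \<le> y" "y \<le> b" "b \<le> a" "a \<le> x" "c \<ge> 0" and s: "y < s" "s < b"
    and e2: "x^2 + y^2 + z^2 = a^2 + b^2 + c^2"
    and e3: "x^3 + y^3 + z^3 = a^3 + b^3 + c^3"
  shows "pp s a + pp s b + pp s c \<le> pp s x + pp s y + pp s z"
proof -
  have b0: "b > 0" and by0: "b - y > 0" and s0: "s > 0" using ch s by auto
  define A where "A = (b-s)^2/(b * (b-y))"
  define B where "B = -3/2* A* y"
  have Ab: "A* b * (b-y) = (b-s)^2" using b0 by0 by (simp add: A_def)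
  have A0: "A \<ge> 0" using b0 by0 by (simp add: A_def)
  have hi: "3 * (1-A)* v^2 + 2 * (-3* s-B)* v + 3* s^2 = 3 * (v-b) * ((1-A)* v - s^2/b)" for v
  proof -
    have "b * (3 * (1-A)* v^2 + 2 * (-3* s-B)* v + 3* s^2 - 3 * (v-b) * ((1-A)* v - s^2/b)) = 3* v * ((b-s)^2 - A* b * (b-y))"
      using b0 by (simp add: B_def algebra_simps power2_eq_square)
    then show ?thesis using Ab b0 by simp
  qed
  have "A* b * (b-y) \<le> (b-s) * (b-y)" unfolding Ab using s by (simp add: power2_eq_square mult_left_mono)
  hence "A* b \<le> b - s" using by0 by simp
  hence A1: "1 - A \<ge> s/b" using b0 by (simp add: field_simps)
  have F0: "(1-A)* v - s^2/b \<ge> 0" if "s \<le> v" for v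
  proof -
    have "s/b \<ge> 0" using s0 b0 by simp
    hence "1 - A \<ge> 0" using A1 by linarith
    hence "(1-A) * v \<ge> (1-A) * s" using that by (intro mult_left_mono)
    moreover have "(1-A)* s \<ge> (s/b)* s" using mult_right_mono[OF A1, of s] s0 by simp
    ultimately show ?thesis by (simp add: power2_eq_square)
  qed
  have lo: "3 * (-A)* v^2 + 2 * (-B)* v = 3* A* v * (y-v)" for v
    by (simp add: B_def algebra_simps power2_eq_square)
  have m1: "Phi s A B a \<le> Phi s A B x"
    apply (rule phi_mono_hi)
      subgoal using ch s by simp
      subgoal using ch s by simp
    subgoal for v unfolding hi using F0[of v] ch s by (intro mult_nonneg_nonneg) auto done
  have "Phi s A B b \<le> Phi s A B s"
    apply (rule phi_anti_hi)
      subgoal using ch s by simp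
      subgoal using ch s by simp
    subgoal for v proof -
      assume v: "s \<le> v" "v \<le> b"
      have h: "(v-b) * ((1-A) * v - s^2/b) \<le> 0" using F0[of v] v by (intro mult_nonpos_nonneg) auto
      show ?thesis unfolding hi using h by (simp only: mult.assoc)
    qed done
  also have "Phi s A B s \<le> Phi s A B y"
    apply (rule phi_anti_lo)
      subgoal using ch s by simp
      subgoal using ch s by simp
    subgoal for v unfolding lo using A0 ch by (simp add: mult_nonneg_nonpos) done
  finally have m2: "Phi s A B b \<le> Phi s A B y" .
  have m3: "Phi s A B c \<le> Phi s A B z"
    apply (rule phi_mono_lo)
      subgoal using ch s by simp
      subgoal using ch s by simp
    subgoal for v unfolding lo using A0 ch by simp done
  show ?thesis using phi_combine[OF m1 m2 m3 e2 e3] .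
qed

lemma pp_zero: "v \<le> s \<Longrightarrow> pp s v = 0"
  by (simp add: pp_def max_def)

lemma pp_mono: "v \<le> w \<Longrightarrow> pp s v \<le> pp s w"
  unfolding pp_def by (intro power_mono) auto

lemma G_sorted:
  fixes x y z a b c s :: real
  assumes so: "x \<ge> y" "y \<ge> z" "z \<ge> 0" "a \<ge> b" "b \<ge> c" "c \<ge> 0" "x \<ge> a" and s: "s \<ge> 0"
    and e2: "x^2 + y^2 + z^2 = a^2 + b^2 + c^2"
    and e3: "x^3 + y^3 + z^3 = a^3 + b^3 + c^3"
  shows "pp s a + pp s b + pp s c \<le> pp s x + pp s y + pp s z"
proof -
  from order_lemma[OF so e2 e3] have cz: "c \<le> z" and yb: "y \<le> b" by auto
  show ?thesis
  proof (cases "s = 0")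
    case True
    have "pp s v = v^3" if "v \<ge> 0" for v using that True by (simp add: pp_def max_def)
    then show ?thesis using so e3 by simp
  next
    case False
    hence s0: "s > 0" using s by simp
    show ?thesis
    proof (cases "s \<le> y")
      case True
      show ?thesis by (rule G_case1[OF cz _ yb _ _ _ s0 True e2 e3]) (use so in auto)
    next
      case False
      show ?thesis
      proof (cases "s < b")
        case True
        show ?thesis by (rule G_case2[OF cz _ yb _ _ _ _ True e2 e3]) (use so False in auto)
      next
        case False
        have "pp s b = 0" "pp s c = 0" "pp s y = 0" "pp s z = 0"
          using False so yb cz by (auto intro!: pp_zero)
        moreover have "pp s a \<le> pp s x" using so by (intro pp_mono)
        ultimately show ?thesis by simp
      qed
    qed
  qed
qed

lemma sort3:
  fixes x y z :: real
  shows "\<exists>x' y' z'. x' \<ge> y' \<and> y' \<ge> z' \<and> (\<forall>h::real\<Rightarrow>real. h x + h y + h z = h x' + h y' + h z')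
           \<and> x' = max x (max y z) \<and> z' = min x (min y z)"
proof -
  consider "x\<ge>y" "y\<ge>z" | "x\<ge>z" "z\<ge>y" | "y\<ge>x" "x\<ge>z" | "y\<ge>z" "z\<ge>x" | "z\<ge>x" "x\<ge>y" | "z\<ge>y" "y\<ge>x"
    by linarith
  then show ?thesis
  proof cases
    case 1 thus ?thesis by (intro exI[of _ x] exI[of _ y] exI[of _ z]) (auto simp: max_def min_def ac_simps)
  next
    case 2 thus ?thesis by (intro exI[of _ x] exI[of _ z] exI[of _ y]) (auto simp: max_def min_def ac_simps)
  next
    case 3 thus ?thesis by (intro exI[of _ y] exI[of _ x] exI[of _ z]) (auto simp: max_def min_def ac_simps)
  next
    case 4 thus ?thesis by (intro exI[of _ y] exI[of _ z] exI[of _ x]) (auto simp: max_def min_def ac_simps)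
  next
    case 5 thus ?thesis by (intro exI[of _ z] exI[of _ x] exI[of _ y]) (auto simp: max_def min_def ac_simps)
  next
    case 6 thus ?thesis by (intro exI[of _ z] exI[of _ y] exI[of _ x]) (auto simp: max_def min_def ac_simps)
  qed
qed

lemma G_all:
  fixes x y z a b c s :: real
  assumes nn: "x \<ge> 0" "y \<ge> 0" "z \<ge> 0" "a \<ge> 0" "b \<ge> 0" "c \<ge> 0"
    and mx: "max x (max y z) \<ge> max a (max b c)" and s: "s \<ge> 0"
    and e2: "x^2 + y^2 + z^2 = a^2 + b^2 + c^2"
    and e3: "x^3 + y^3 + z^3 = a^3 + b^3 + c^3"
  shows "pp s a + pp s b + pp s c \<le> pp s x + pp s y + pp s z"
proof -
  obtain x' y' z' where X: "x' \<ge> y'" "y' \<ge> z'" "\<And>h::real\<Rightarrow>real. h x + h y + h z = h x' + h y' + h z'"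
    "x' = max x (max y z)" "z' = min x (min y z)" using sort3[of x y z] by blast
  obtain a' b' c' where A: "a' \<ge> b'" "b' \<ge> c'" "\<And>h::real\<Rightarrow>real. h a + h b + h c = h a' + h b' + h c'"
    "a' = max a (max b c)" "c' = min a (min b c)" using sort3[of a b c] by blast
  have "pp s a' + pp s b' + pp s c' \<le> pp s x' + pp s y' + pp s z'"
  proof (rule G_sorted)
    show "z' \<ge> 0" "c' \<ge> 0" using X(5) A(5) nn by auto
    show "x' \<ge> a'" using X(4) A(4) mx by simp
    show "x'^2 + y'^2 + z'^2 = a'^2 + b'^2 + c'^2" using e2 X(3)[of "\<lambda>v. v^2"] A(3)[of "\<lambda>v. v^2"] by simp
    show "x'^3 + y'^3 + z'^3 = a'^3 + b'^3 + c'^3" using e3 X(3)[of "\<lambda>v. v^3"] A(3)[of "\<lambda>v. v^3"] by simp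
  qed (use X A s in auto)
  then show ?thesis using X(3)[of "pp s"] A(3)[of "pp s"] by simp
qed

lemma pp_pair:
  fixes s t :: real assumes "t \<ge> 0" "s > 0"
  shows "pp (-s) t + pp (-s) (-t) = 2 * s^3 + 6 * s * t^2 + pp s t"
proof (cases "t \<ge> s")
  case True
  then show ?thesis using assms by (simp add: pp_def max_def power2_eq_square power3_eq_cube algebra_simps)
next
  case False
  then show ?thesis using assms by (simp add: pp_def max_def power2_eq_square power3_eq_cube algebra_simps)
qed

lemma Ghat:
  fixes x y z a b c r :: real
  assumes nn: "x \<ge> 0" "y \<ge> 0" "z \<ge> 0" "a \<ge> 0" "b \<ge> 0" "c \<ge> 0"
    and mx: "max x (max y z) \<ge> max a (max b c)"
    and e2: "x^2 + y^2 + z^2 = a^2 + b^2 + c^2"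
    and e3: "x^3 + y^3 + z^3 = a^3 + b^3 + c^3"
  shows "pp r a + pp r b + pp r c + pp r (-c) + pp r (-b) + pp r (-a)
       \<le> pp r x + pp r y + pp r z + pp r (-z) + pp r (-y) + pp r (-x)"
proof (cases "r \<ge> 0")
  case True
  have "pp r (-v) = 0" if "v \<ge> 0" for v using that True by (intro pp_zero) simp
  then show ?thesis using G_all[OF nn mx True e2 e3] nn by simp
next
  case False
  define s where "s = -r"
  have s0: "s > 0" using False by (simp add: s_def)
  have r: "r = -s" by (simp add: s_def)
  have "6 * s * (x^2 + y^2 + z^2) = 6 * s * (a^2 + b^2 + c^2)" using e2 by simp
  then show ?thesis unfolding r using G_all[OF nn mx less_imp_le[OF s0] e2 e3]
      pp_pair[OF nn(1) s0] pp_pair[OF nn(2) s0] pp_pair[OF nn(3) s0]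
      pp_pair[OF nn(4) s0] pp_pair[OF nn(5) s0] pp_pair[OF nn(6) s0]
    by (simp add: algebra_simps)
qed

lemma sum6: "(\<Sum>i<length [p1,p2,p3,p4,p5,p6]. (g::real\<Rightarrow>real) ([p1,p2,p3,p4,p5,p6] ! i)) = g p1 + g p2 + g p3 + g p4 + g p5 + g p6"
  by (simp add: lessThan_Suc numeral_eq_Suc)

definition Tq :: "(real\<Rightarrow>real) \<Rightarrow> (real\<Rightarrow>real) \<Rightarrow> (real\<Rightarrow>real) \<Rightarrow> (real\<Rightarrow>real) \<Rightarrow> real \<Rightarrow> real \<Rightarrow> real" where
  "Tq f f1 f2 f3 p r = f r + f1 r * (p - r) + f2 r * (p - r)^2 / 2 + f3 r * (p - r)^3 / 6"

lemma Tq_sum: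
  "Tq f f1 f2 f3 x r + Tq f f1 f2 f3 y r + Tq f f1 f2 f3 z r + Tq f f1 f2 f3 (-z) r + Tq f f1 f2 f3 (-y) r + Tq f f1 f2 f3 (-x) r
   = 6 * f r - 6 * r * f1 r + f2 r * (x^2+y^2+z^2+3 * r^2) - f3 r * (r^3 + r * (x^2+y^2+z^2))"
  by (simp add: Tq_def field_simps power2_eq_square power3_eq_cube)

definition Qf :: "(real\<Rightarrow>real) \<Rightarrow> (real\<Rightarrow>real) \<Rightarrow> (real\<Rightarrow>real) \<Rightarrow> (real\<Rightarrow>real) \<Rightarrow> real \<Rightarrow> real \<Rightarrow> real" where
  "Qf f f1 f2 f3 p r = (if r \<le> p then Tq f f1 f2 f3 p r else f p)"

lemma Qf_deriv:
  assumes d: "\<forall>t. (f has_real_derivative f1 t) (at t)" "\<forall>t. (f1 has_real_derivative f2 t) (at t)"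
    "\<forall>t. (f2 has_real_derivative f3 t) (at t)" "\<forall>t. (f3 has_real_derivative f4 t) (at t)"
  shows "((\<lambda>r. Qf f f1 f2 f3 p r) has_real_derivative (f4 r * pp r p / 6)) (at r)"
proof -
  have T: "((\<lambda>r. Tq f f1 f2 f3 p r) has_real_derivative (f4 r * (p - r)^3 / 6)) (at r)" for r
    unfolding Tq_def
    by (auto intro!: derivative_eq_intros d[rule_format] simp: field_simps power2_eq_square power3_eq_cube)
  have "((\<lambda>r. if r \<le> p then Tq f f1 f2 f3 p r else f p) has_real_derivative
        (if r \<le> p then f4 r * (p - r)^3 / 6 else 0)) (at r)"
    by (rule deriv_glue[OF T]) (auto simp: Tq_def)
  moreover have "(if r \<le> p then f4 r * (p - r)^3 / 6 else 0) = f4 r * pp r p / 6"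
    by (simp add: pp_def max_def)
  ultimately show ?thesis unfolding Qf_def[abs_def] by simp
qed

lemma backward:
  fixes x y z a b c :: real
  assumes nn: "x \<ge> 0" "y \<ge> 0" "z \<ge> 0" "a \<ge> 0" "b \<ge> 0" "c \<ge> 0"
    and mx: "max x (max y z) \<ge> max a (max b c)"
    and e2: "x^2 + y^2 + z^2 = a^2 + b^2 + c^2"
    and e3: "x^3 + y^3 + z^3 = a^3 + b^3 + c^3"
    and fc: "four_convex f"
  shows "f a + f b + f c + f (-c) + f (-b) + f (-a) \<le> f x + f y + f z + f (-z) + f (-y) + f (-x)"
proof -
  obtain f1 f2 f3 f4 where d: "\<forall>t. (f has_real_derivative f1 t) (at t)" "\<forall>t. (f1 has_real_derivative f2 t) (at t)"
    "\<forall>t. (f2 has_real_derivative f3 t) (at t)" "\<forall>t. (f3 has_real_derivative f4 t) (at t)" and f4: "\<forall>t. f4 t \<ge> 0"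
    using fc unfolding four_convex_def by blast
  let ?Q = "Qf f f1 f2 f3"
  define E where "E r = (?Q x r + ?Q y r + ?Q z r + ?Q (-z) r + ?Q (-y) r + ?Q (-x) r)
     - (?Q a r + ?Q b r + ?Q c r + ?Q (-c) r + ?Q (-b) r + ?Q (-a) r)" for r
  define R where "R = \<bar>x\<bar> + \<bar>y\<bar> + \<bar>z\<bar> + \<bar>a\<bar> + \<bar>b\<bar> + \<bar>c\<bar> + 1"
  have "E (-R) \<le> E R"
  proof (rule DERIV_nonneg_imp_nondecreasing[of "-R" R E])
    show "-R \<le> R" by (simp add: R_def)
    fix r
    let ?D = "(f4 r * pp r x / 6 + f4 r * pp r y / 6 + f4 r * pp r z / 6 + f4 r * pp r (-z) / 6 + f4 r * pp r (-y) / 6 + f4 r * pp r (-x) / 6)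
      - (f4 r * pp r a / 6 + f4 r * pp r b / 6 + f4 r * pp r c / 6 + f4 r * pp r (-c) / 6 + f4 r * pp r (-b) / 6 + f4 r * pp r (-a) / 6)"
    have "(E has_real_derivative ?D) (at r)"
      unfolding E_def[abs_def] by (intro DERIV_add DERIV_diff Qf_deriv[OF d])
    moreover have "?D \<ge> 0"
    proof -
      have "?D = f4 r / 6 * ((pp r x + pp r y + pp r z + pp r (-z) + pp r (-y) + pp r (-x))
          - (pp r a + pp r b + pp r c + pp r (-c) + pp r (-b) + pp r (-a)))" by (simp add: algebra_simps)
      also have "\<dots> \<ge> 0" using Ghat[OF nn mx e2 e3, of r] f4 by (intro mult_nonneg_nonneg) auto
      finally show ?thesis .
    qed
    ultimately show "\<exists>y. (E has_real_derivative y) (at r) \<and> 0 \<le> y" by blast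
  qed
  moreover have "E R = (f x + f y + f z + f (-z) + f (-y) + f (-x)) - (f a + f b + f c + f (-c) + f (-b) + f (-a))"
  proof -
    have "x < R" "y < R" "z < R" "-z < R" "-y < R" "-x < R" "a < R" "b < R" "c < R" "-c < R" "-b < R" "-a < R" by (auto simp: R_def)
    then show ?thesis unfolding E_def Qf_def by (simp add: not_le)
  qed
  moreover have "E (-R) = 0"
  proof -
    have "-R \<le> x" "-R \<le> y" "-R \<le> z" "-R \<le> -z" "-R \<le> -y" "-R \<le> -x" "-R \<le> a" "-R \<le> b" "-R \<le> c" "-R \<le> -c" "-R \<le> -b" "-R \<le> -a" by (auto simp: R_def)
    then have "E (-R) = (Tq f f1 f2 f3 x (-R) + Tq f f1 f2 f3 y (-R) + Tq f f1 f2 f3 z (-R) + Tq f f1 f2 f3 (-z) (-R) + Tq f f1 f2 f3 (-y) (-R) + Tq f f1 f2 f3 (-x) (-R))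
       - (Tq f f1 f2 f3 a (-R) + Tq f f1 f2 f3 b (-R) + Tq f f1 f2 f3 c (-R) + Tq f f1 f2 f3 (-c) (-R) + Tq f f1 f2 f3 (-b) (-R) + Tq f f1 f2 f3 (-a) (-R))"
      unfolding E_def Qf_def by simp
    also have "\<dots> = 0" unfolding Tq_sum e2 by simp
    finally show ?thesis .
  qed
  ultimately show ?thesis by simp
qed

lemma forward:
  fixes x y z a b c :: real
  assumes nn: "x \<ge> 0" "y \<ge> 0" "z \<ge> 0" "a \<ge> 0" "b \<ge> 0" "c \<ge> 0"
    and mj: "maj4 [x, y, z, -z, -y, -x] [a, b, c, -c, -b, -a]"
  shows "max x (max y z) \<ge> max a (max b c)"
proof (rule ccontr)
  define m where "m = max x (max y z)"
  define M where "M = max a (max b c)"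
  assume "\<not> ?thesis"
  hence mM: "m < M" unfolding m_def M_def by (simp only: not_le)
  define f where "f v = (max (v - m) 0)^5" for v
  have fc: "four_convex f"
    unfolding four_convex_def
  proof (intro exI conjI allI)
    fix t
    show "(f has_real_derivative 5 * (max (t - m) 0)^4) (at t)"
      unfolding f_def[abs_def] using pow_plus_deriv[of 4 m t] by simp
    show "((\<lambda>t. 5 * (max (t - m) 0)^4) has_real_derivative 20 * (max (t - m) 0)^3) (at t)"
      using DERIV_cmult[OF pow_plus_deriv[of 3 m t], of 5] by simp
    show "((\<lambda>t. 20 * (max (t - m) 0)^3) has_real_derivative 60 * (max (t - m) 0)^2) (at t)"
      using DERIV_cmult[OF pow_plus_deriv[of 2 m t], of 20] by simp
    show "((\<lambda>t. 60 * (max (t - m) 0)^2) has_real_derivative 120 * max (t - m) 0) (at t)"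
      using DERIV_cmult[OF pow_plus_deriv[of 1 m t], of 60] by (simp add: power2_eq_square)
    show "0 \<le> 120 * max (t - m) 0" by simp
  qed
  have ineq: "f a + f b + f c + f (-c) + f (-b) + f (-a) \<le> f x + f y + f z + f (-z) + f (-y) + f (-x)"
    using mj fc unfolding maj4_def sum6 by blast
  have z: "f v = 0" if "v \<le> m" for v using that by (simp add: f_def max_def)
  have m0: "m \<ge> 0" using nn by (simp add: m_def)
  have "f x + f y + f z + f (-z) + f (-y) + f (-x) = 0"
    using nn m0 by (simp add: z m_def)
  moreover have fnn: "f v \<ge> 0" for v by (simp add: f_def)
  moreover have "f M > 0" using mM by (simp add: f_def)
  moreover have "M = a \<or> M = b \<or> M = c" by (auto simp: M_def max_def)
  ultimately have "f a > 0 \<or> f b > 0 \<or> f c > 0" by auto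
  moreover have p: "0 \<le> f a" "0 \<le> f b" "0 \<le> f c" "0 \<le> f (-a)" "0 \<le> f (-b)" "0 \<le> f (-c)" using fnn by auto
  moreover note zz = \<open>f x + f y + f z + f (-z) + f (-y) + f (-x) = 0\<close>
  ultimately have "f a + f b + f c + f (-c) + f (-b) + f (-a) > f x + f y + f z + f (-z) + f (-y) + f (-x)"
    by linarith
  with ineq show False by simp
qed

theorem mainTheorem20:
  fixes x y z a b c :: real
  assumes "x \<ge> 0" "y \<ge> 0" "z \<ge> 0" "a \<ge> 0" "b \<ge> 0" "c \<ge> 0"
    and "x^2 + y^2 + z^2 = a^2 + b^2 + c^2"
    and "x^3 + y^3 + z^3 = a^3 + b^3 + c^3"
  shows "maj4 [x, y, z, -z, -y, -x] [a, b, c, -c, -b, -a]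
           \<longleftrightarrow> max x (max y z) \<ge> max a (max b c)"
proof
  assume "maj4 [x, y, z, -z, -y, -x] [a, b, c, -c, -b, -a]"
  then show "max x (max y z) \<ge> max a (max b c)" using forward assms by blast
next
  assume mx: "max x (max y z) \<ge> max a (max b c)"
  show "maj4 [x, y, z, -z, -y, -x] [a, b, c, -c, -b, -a]"
    unfolding maj4_def sum6 using backward[OF assms(1-6) mx assms(7,8)] by simp
qed

end
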